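(* Let $m=2^\alpha\beta$ be a positive integer with $\beta$ odd. Then, as operators on meromorphic functions on the upper half-plane invariant under $\Gamma_0(2)^+$, $$\tilde{\mathbf{T}}_m=\sum_{\substack{r^2\mid m\\ r\ \text{odd}}}\ \sum_{i=0}^{\alpha}\mathbf{T}_{m/(r^22^i)},$$ where the outer sum is over positive odd integers $r$ with $r^2\mid m$.
   Context: Matrices act on the upper half-plane by Möbius transformations. $\Gamma_0(2)$ is the group of integer matrices $\begin{bmatrix}a&b\\c&d\end{bmatrix}$ of determinant $1$ with $c$ even, $w_2=2^{-1/2}\begin{bmatrix}0&-1\\2&0\end{bmatrix}$, and $\Gamma_0(2)^+$ is generated by $\Gamma_0(2)$ and $w_2$. For a positive integer $n$ define $M^n=M_1^n\cup S_1^n\cup S_2^n$ with $M_1^n=\{\begin{bmatrix}x&y\\0&z\end{bmatrix}: x,y,z\in\mathbb{Z},\ xz=n,\ 0\leq y<z,\ \gcd(x,y,z)=1,\ x\text{ odd}\}$, $S_1^n=\{\begin{bmatrix}x&y\\0&z\end{bmatrix}: xz=n,\ 0\leq y<z,\ \gcd(x,y,z)=1,\ z\text{ odd}\}$, $S_2^n=\{2^{-1/2}\begin{bmatrix}x&y\\0&z\end{bmatrix}: xz=2n,\ 0\leq y<z,\ \gcd(x,y,z)=1,\ x,z\text{ even}\}$ (all with $x,z>0$). Operators: $\mathbf{T}_nf(\tau)=\sum_{\gamma\in M^n}f(\gamma\tau)$, and $\tilde{\mathbf{T}}_nf(\tau)=\sum_{xz=n,\,0\leq y<z}f\big(\frac{x\tau+y}{z}\big)$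 if $n$ is odd, while for $n$ even $\tilde{\mathbf{T}}_nf(\tau)=\sum_{xz=n,\,0\leq y<z}f\big(\frac{x\tau+y}{z}\big)+\sum_{xz=2n,\ x,z\text{ even},\ 0\leq y<z}f\big(\frac{x\tau+y}{z}\big)$, sums over integers $x,z>0$, $y$. *)

theory Defs
  imports "HOL-Complex_Analysis.Complex_Analysis"
begin

definition upper_half_plane :: "complex set" where
  "upper_half_plane = {\<tau>. Im \<tau> > 0}"

text \<open>Invariance under Gamma0(2)+ : invariance under Gamma0(2) and under the
  Fricke involution w2, which acts by tau maps to -1/(2 tau).\<close>
definition gamma0_2_plus_invariant :: "(complex \<Rightarrow> complex) \<Rightarrow> bool" where
  "gamma0_2_plus_invariant f \<longleftrightarrow>
     (\<forall>a b c d :: int. \<forall>\<tau>\<in>upper_half_plane. a * d - b * c = 1 \<and> even c \<longrightarrow>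
        f ((of_int a * \<tau> + of_int b) / (of_int c * \<tau> + of_int d)) = f \<tau>) \<and>
     (\<forall>\<tau>\<in>upper_half_plane. f (- 1 / (2 * \<tau>)) = f \<tau>)"

text \<open>Elements of M^n: (x,y,z,False) is the integer matrix [x y; 0 z] (in M1 or S1),
  (x,y,z,True) is 2^(-1/2)[x y; 0 z] (in S2). Scalars do not affect the action.\<close>
definition M1 :: "nat \<Rightarrow> (int \<times> int \<times> int) set" where
  "M1 n = {(x,y,z). x > 0 \<and> z > 0 \<and> x * z = int n \<and> 0 \<le> y \<and> y < z \<and>
                    gcd (gcd x y) z = 1 \<and> odd x}"

definition S1 :: "nat \<Rightarrow> (int \<times> int \<times> int) set" where
  "S1 n = {(x,y,z). x > 0 \<and> z > 0 \<and> x * z = int n \<and> 0 \<le> y \<and> y < z \<and>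
                    gcd (gcd x y) z = 1 \<and> odd z}"

definition S2 :: "nat \<Rightarrow> (int \<times> int \<times> int) set" where
  "S2 n = {(x,y,z). x > 0 \<and> z > 0 \<and> x * z = 2 * int n \<and> 0 \<le> y \<and> y < z \<and>
                    gcd (gcd x y) z = 1 \<and> even x \<and> even z}"

definition Mset :: "nat \<Rightarrow> (int \<times> int \<times> int \<times> bool) set" where
  "Mset n = (\<lambda>(x,y,z). (x,y,z,False)) ` (M1 n \<union> S1 n) \<union> (\<lambda>(x,y,z). (x,y,z,True)) ` S2 n"

definition act :: "int \<Rightarrow> int \<Rightarrow> int \<Rightarrow> complex \<Rightarrow> complex" where
  "act x y z \<tau> = (of_int x * \<tau> + of_int y) / of_int z"

definition hecke_T :: "nat \<Rightarrow> (complex \<Rightarrow> complex) \<Rightarrow> complex \<Rightarrow> complex" where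
  "hecke_T n f \<tau> = (\<Sum>(x,y,z,s)\<in>Mset n. f (act x y z \<tau>))"

definition tildeA :: "nat \<Rightarrow> (int \<times> int \<times> int) set" where
  "tildeA n = {(x,y,z). x > 0 \<and> z > 0 \<and> x * z = int n \<and> 0 \<le> y \<and> y < z}"

definition tildeB :: "nat \<Rightarrow> (int \<times> int \<times> int) set" where
  "tildeB n = {(x,y,z). x > 0 \<and> z > 0 \<and> x * z = 2 * int n \<and> even x \<and> even z \<and> 0 \<le> y \<and> y < z}"

definition hecke_tildeT :: "nat \<Rightarrow> (complex \<Rightarrow> complex) \<Rightarrow> complex \<Rightarrow> complex" where
  "hecke_tildeT n f \<tau> =
     (\<Sum>(x,y,z)\<in>tildeA n. f (act x y z \<tau>)) +
     (if even n then (\<Sum>(x,y,z)\<in>tildeB n. f (act x y z \<tau>)) else 0)"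

end

theory Submission
  imports Defs
begin

definition Rset :: "nat \<Rightarrow> nat set" where
  "Rset n = {r. r > 0 \<and> odd r \<and> r ^ 2 dvd n}"

lemma finite_tildeA: "finite (tildeA n)"
proof -
  have "tildeA n \<subseteq> {1..int n} \<times> {0..int n} \<times> {1..int n}"
  proof
    fix t assume "t \<in> tildeA n"
    then obtain x y z where t: "t = (x,y,z)" "x > 0" "z > 0" "x * z = int n" "0 \<le> y" "y < z"
      unfolding tildeA_def by auto
    have "x * 1 \<le> x * z" using t by (intro mult_left_mono) auto
    moreover have "1 * z \<le> x * z" using t by (intro mult_right_mono) auto
    ultimately show "t \<in> {1..int n} \<times> {0..int n} \<times> {1..int n}" using t by auto
  qed
  then show ?thesis by (rule finite_subset) auto
qed

lemma finite_Rset: "n > 0 \<Longrightarrow> finite (Rset n)"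
proof -
  assume "n > 0"
  have "Rset n \<subseteq> {..n}"
  proof
    fix r assume "r \<in> Rset n"
    then have "r ^ 2 dvd n" "r > 0" unfolding Rset_def by auto
    then have "r ^ 2 \<le> n" using \<open>n > 0\<close> by (simp add: dvd_imp_le)
    moreover have "r \<le> r ^ 2" using \<open>r > 0\<close> by (simp add: power2_eq_square)
    ultimately show "r \<in> {..n}" by simp
  qed
  then show ?thesis by (rule finite_subset) auto
qed

lemma gcd3_scale:
  fixes r x y z :: int
  assumes "r \<ge> 0"
  shows "gcd (gcd (r*x) (r*y)) (r*z) = r * gcd (gcd x y) z"
  using assms by (simp add: gcd_mult_left abs_mult)

lemma scale_sum:
  fixes F :: "int \<times> int \<times> int \<Rightarrow> complex" and C :: "int \<Rightarrow> int \<Rightarrow> bool"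
  assumes n: "n > 0"
    and scale: "\<And>g x y z. g > 0 \<Longrightarrow> F (g*x, g*y, g*z) = F (x,y,z)"
    and Cinv: "\<And>r x z. r > 0 \<Longrightarrow> odd r \<Longrightarrow> C (r*x) (r*z) = C x z"
  shows "(\<Sum>r\<in>Rset n. \<Sum>t\<in>{(x,y,z). (x,y,z) \<in> tildeA (n div r^2) \<and> gcd (gcd x y) z = 1 \<and> C x z}. F t)
       = (\<Sum>t\<in>{(x,y,z). (x,y,z) \<in> tildeA n \<and> odd (gcd (gcd x y) z) \<and> C x z}. F t)"
proof -
  let ?P = "\<lambda>r. {(x,y,z). (x,y,z) \<in> tildeA (n div r^2) \<and> gcd (gcd x y) z = 1 \<and> C x z}"
  let ?T = "{(x,y,z). (x,y,z) \<in> tildeA n \<and> odd (gcd (gcd x y) z) \<and> C x z}"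
  have fin: "finite (?P r)" for r
    by (rule finite_subset[OF _ finite_tildeA[of "n div r^2"]]) auto
  have "(\<Sum>r\<in>Rset n. \<Sum>t\<in>?P r. F t) = (\<Sum>(r,t)\<in>Sigma (Rset n) ?P. F t)"
    using sum.Sigma[OF finite_Rset[OF n], of ?P "\<lambda>r t. F t"] fin by simp
  also have "\<dots> = (\<Sum>t\<in>?T. F t)"
  proof (rule sum.reindex_bij_witness[where j = "\<lambda>(r,(x,y,z)). (int r*x, int r*y, int r*z)"
        and i = "\<lambda>(x,y,z). (nat (gcd (gcd x y) z), (x div gcd (gcd x y) z, y div gcd (gcd x y) z, z div gcd (gcd x y) z))"])
    fix a assume "a \<in> Sigma (Rset n) ?P"
    then obtain r x y z where a: "a = (r,(x,y,z))" "r \<in> Rset n" "(x,y,z) \<in> ?P r" by auto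
    have g: "gcd (gcd (int r*x) (int r*y)) (int r*z) = int r"
      using a gcd3_scale[of "int r" x y z] by simp
    have rpos: "r > 0" using a(2) unfolding Rset_def by auto
    show "(case case a of (r, x, y, z) \<Rightarrow> (int r * x, int r * y, int r * z) of
           (x, y, z) \<Rightarrow> (nat (gcd (gcd x y) z), x div gcd (gcd x y) z, y div gcd (gcd x y) z, z div gcd (gcd x y) z)) = a"
      using a g rpos by simp
    have rdvd: "r^2 dvd n" using a(2) unfolding Rset_def by auto
    have "int r * x * (int r * z) = int (r^2) * (x * z)" by (simp add: power2_eq_square algebra_simps)
    also have "x * z = int (n div r^2)" using a(3) unfolding tildeA_def by auto
    also have "int (r^2) * int (n div r^2) = int n" using rdvd by (metis dvd_mult_div_cancel of_nat_mult)
    finally have prod: "int r * x * (int r * z) = int n" .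
    show "(case a of (r, x, y, z) \<Rightarrow> (int r * x, int r * y, int r * z)) \<in> ?T"
      using a g rpos prod Cinv[of "int r" x z] unfolding Rset_def tildeA_def
      by (auto simp: mult_strict_left_mono)
    show "F (case a of (r, x, y, z) \<Rightarrow> (int r * x, int r * y, int r * z))
          = (case a of (r, t) \<Rightarrow> F t)"
      using a rpos scale[of "int r" x y z] by simp
  next
    fix b assume b: "b \<in> ?T"
    then obtain x y z where bb: "b = (x,y,z)" "x > 0" "z > 0" "x * z = int n" "0 \<le> y" "y < z"
      "odd (gcd (gcd x y) z)" "C x z"
      unfolding tildeA_def by auto
    define g where "g = gcd (gcd x y) z"
    have gpos: "g > 0" using bb(2) unfolding g_def by (simp add: gcd_pos_int)
    have dx: "g dvd x" "g dvd y" "g dvd z" unfolding g_def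
      by (meson dvd_trans gcd_dvd1 gcd_dvd2)+
    obtain x' y' z' where xyz: "x = g*x'" "y = g*y'" "z = g*z'" using dx by (meson dvdE)
    have qs: "x div g = x'" "y div g = y'" "z div g = z'" using xyz gpos by simp_all
    have "g = gcd (gcd x y) z" by (rule g_def)
    also have "\<dots> = gcd (gcd (g*x') (g*y')) (g*z')" by (simp only: xyz)
    also have "\<dots> = g * gcd (gcd x' y') z'" using gcd3_scale[of g x' y' z'] gpos by simp
    finally have "g * 1 = g * gcd (gcd x' y') z'" by simp
    then have g1: "gcd (gcd x' y') z' = 1" using gpos
      by simp
    have ng: "nat g > 0" "odd (nat g)" using gpos bb(7) unfolding g_def
      by (auto simp: even_nat_iff)
    have x'p: "x' > 0" "z' > 0" using bb(2,3) xyz gpos by (auto simp: zero_less_mult_iff)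
    have yb: "0 \<le> y'" "y' < z'" using bb(5,6) xyz gpos
      by (auto simp: zero_le_mult_iff mult_less_cancel_left)
    have nprod: "int n = int (nat g ^ 2) * (x' * z')" using bb(4) xyz gpos
      by (simp add: power2_eq_square algebra_simps)
    have "x' * z' \<ge> 0" using x'p by simp
    then have nprod': "n = nat g ^ 2 * nat (x' * z')" using nprod
      by (metis nat_int nat_mult_distrib nat_int of_nat_0_le_iff)
    have dv: "nat g ^ 2 dvd n" using nprod' by simp
    have nd: "n div nat g ^ 2 = nat (x' * z')" using nprod' ng by simp
    have gg: "gcd (gcd x y) z = g" by (simp add: g_def)
    have go: "odd g" using bb(7) gg by simp
    have Cq: "C x' z'" using Cinv[OF gpos go, of x' z'] bb(8) xyz by simp
    show "(case case b of (x, y, z) \<Rightarrow> (nat (gcd (gcd x y) z), x div gcd (gcd x y) z, y div gcd (gcd x y) z, z div gcd (gcd x y) z) of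
           (r, x, y, z) \<Rightarrow> (int r * x, int r * y, int r * z)) = b"
      using bb(1) xyz[symmetric] qs gpos gg by simp
    show "(case b of (x, y, z) \<Rightarrow> (nat (gcd (gcd x y) z), x div gcd (gcd x y) z, y div gcd (gcd x y) z, z div gcd (gcd x y) z))
          \<in> Sigma (Rset n) ?P"
      using bb(1) gg qs ng dv nd g1 x'p yb Cq unfolding Rset_def tildeA_def
      using \<open>x' * z' \<ge> 0\<close> by auto
  qed
  finally show ?thesis .
qed


definition FF :: "(complex \<Rightarrow> complex) \<Rightarrow> complex \<Rightarrow> int \<times> int \<times> int \<Rightarrow> complex" where
  "FF f \<tau> t = (case t of (x,y,z) \<Rightarrow> f (act x y z \<tau>))"

lemma FF_scale: "g > 0 \<Longrightarrow> FF f \<tau> (g*x, g*y, g*z) = FF f \<tau> (x,y,z)"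
proof -
  assume g: "g > 0"
  have "(of_int (g*x) * \<tau> + of_int (g*y)) / of_int (g*z)
      = (of_int g * (of_int x * \<tau> + of_int y)) / (of_int g * of_int z)"
    by (simp add: algebra_simps)
  also have "\<dots> = (of_int x * \<tau> + of_int y) / of_int z"
    using g by (subst mult_divide_mult_cancel_left) auto
  finally show ?thesis by (simp add: FF_def act_def)
qed

definition Aoset :: "nat \<Rightarrow> (int \<times> int \<times> int) set" where
  "Aoset n = {(x,y,z). (x,y,z) \<in> tildeA n \<and> odd (gcd (gcd x y) z) \<and> \<not> (even x \<and> even z)}"
definition Aeset :: "nat \<Rightarrow> (int \<times> int \<times> int) set" where
  "Aeset n = {(x,y,z). (x,y,z) \<in> tildeA n \<and> odd (gcd (gcd x y) z) \<and> (even x \<and> even z)}"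
definition Agset :: "nat \<Rightarrow> (int \<times> int \<times> int) set" where
  "Agset n = {(x,y,z). (x,y,z) \<in> tildeA n \<and> even (gcd (gcd x y) z)}"

lemma fin_sets: "finite (Aoset n)" "finite (Aeset n)" "finite (Agset n)"
  by (rule finite_subset[OF _ finite_tildeA[of n]]; auto simp: Aoset_def Aeset_def Agset_def)+

lemma gcd_even_both: "even (gcd (gcd x y) z) \<Longrightarrow> even (x::int) \<and> even z"
  by (meson dvd_trans gcd_dvd1 gcd_dvd2)

lemma tildeA_sum: "sum g (tildeA n) = sum g (Aoset n) + sum g (Aeset n) + sum g (Agset n)"
proof -
  have "tildeA n = (Aoset n \<union> Aeset n) \<union> Agset n"
    unfolding Aoset_def Aeset_def Agset_def by auto
  moreover have d1: "(Aoset n \<union> Aeset n) \<inter> Agset n = {}" "Aoset n \<inter> Aeset n = {}"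
    by (auto simp: Aoset_def Aeset_def Agset_def)
  moreover have "sum g ((Aoset n \<union> Aeset n) \<union> Agset n) = sum g (Aoset n \<union> Aeset n) + sum g (Agset n)"
    by (rule sum.union_disjoint[OF _ fin_sets(3) d1(1)]) (simp add: fin_sets)
  moreover have "sum g (Aoset n \<union> Aeset n) = sum g (Aoset n) + sum g (Aeset n)"
    by (rule sum.union_disjoint[OF fin_sets(1) fin_sets(2) d1(2)])
  ultimately show ?thesis by simp
qed

lemma tildeB_eq: "tildeB n = Aeset (2*n) \<union> Agset (2*n)"
  unfolding tildeB_def Aeset_def Agset_def tildeA_def
  using gcd_even_both by auto

lemma tildeB_sum: "sum g (tildeB n) = sum g (Aeset (2*n)) + sum g (Agset (2*n))"
proof -
  have d: "Aeset (2*n) \<inter> Agset (2*n) = {}" by (auto simp: Aeset_def Agset_def)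
  show ?thesis unfolding tildeB_eq by (rule sum.union_disjoint[OF fin_sets(2) fin_sets(3) d])
qed

lemma Ag_empty: "\<not> 4 dvd n \<Longrightarrow> Agset n = {}"
proof (rule ccontr)
  assume n4: "\<not> 4 dvd n" and "Agset n \<noteq> {}"
  then obtain x y z where m: "(x,y,z) \<in> Agset n" by auto
  have m1: "x * z = int n" using m unfolding Agset_def tildeA_def by simp
  have m2: "even (gcd (gcd x y) z)" using m unfolding Agset_def by simp
  have e: "even x" "even z" using gcd_even_both[OF m2] by auto
  obtain a where a: "x = 2*a" using e(1) by (elim evenE)
  obtain b where b: "z = 2*b" using e(2) by (elim evenE)
  have "int n = 4 * (a*b)" using m1 unfolding a b by (simp add: algebra_simps)
  then have "int 4 dvd int n" by simp
  then have "4 dvd n" by (simp only: int_dvd_int_iff)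
  with n4 show False by simp
qed

lemma Ae_empty: "odd n \<Longrightarrow> Aeset n = {}"
proof (rule ccontr)
  assume n: "odd n" and "Aeset n \<noteq> {}"
  then obtain x y z where m: "(x,y,z) \<in> Aeset n" by auto
  have m1: "x * z = int n" using m unfolding Aeset_def tildeA_def by simp
  have e: "even x" using m unfolding Aeset_def by simp
  have "even (x * z)" using e by simp
  then have "even (int n)" using m1 by simp
  with n show False by simp
qed

lemma Ag_sum: "(\<Sum>t\<in>Agset n. FF f \<tau> t) = (if 4 dvd n then (\<Sum>t\<in>tildeA (n div 4). FF f \<tau> t) else 0)"
proof (cases "4 dvd n")
  case False then show ?thesis using Ag_empty by simp
next
  case True
  then obtain k where k: "n = 4 * k" by blast
  have "(\<Sum>t\<in>Agset n. FF f \<tau> t) = (\<Sum>t\<in>tildeA k. FF f \<tau> t)"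
  proof (rule sum.reindex_bij_witness[where j = "\<lambda>(x,y,z). (x div 2, y div 2, z div 2)"
        and i = "\<lambda>(x,y,z). (2*x, 2*y, 2*z)"])
    fix a assume a: "a \<in> Agset n"
    then obtain x y z where xyz: "a = (x,y,z)" "x > 0" "z > 0" "x * z = int n" "0 \<le> y" "y < z"
      "even (gcd (gcd x y) z)"
      unfolding Agset_def tildeA_def by auto
    have ev: "even x" "even y" "even z" using xyz(7) by (meson dvd_trans gcd_dvd1 gcd_dvd2)+
    obtain x' where q1: "x = 2*x'" using ev(1) by (elim evenE)
    obtain y' where q2: "y = 2*y'" using ev(2) by (elim evenE)
    obtain z' where q3: "z = 2*z'" using ev(3) by (elim evenE)
    note q = q1 q2 q3
    show "(case case a of (x, y, z) \<Rightarrow> (x div 2, y div 2, z div 2) of (x, y, z) \<Rightarrow> (2 * x, 2 * y, 2 * z)) = a"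
      using xyz(1) q by simp
    show "(case a of (x, y, z) \<Rightarrow> (x div 2, y div 2, z div 2)) \<in> tildeA k"
      using xyz q k unfolding tildeA_def by auto
    show "FF f \<tau> (case a of (x, y, z) \<Rightarrow> (x div 2, y div 2, z div 2)) = FF f \<tau> a"
      using xyz(1) q FF_scale[of 2 f \<tau> x' y' z'] by simp
  next
    fix b assume b: "b \<in> tildeA k"
    then obtain x y z where xyz: "b = (x,y,z)" "x > 0" "z > 0" "x * z = int k" "0 \<le> y" "y < z"
      unfolding tildeA_def by auto
    show "(case case b of (x, y, z) \<Rightarrow> (2 * x, 2 * y, 2 * z) of (x, y, z) \<Rightarrow> (x div 2, y div 2, z div 2)) = b"
      using xyz(1) by simp
    have "gcd (gcd (2*x) (2*y)) (2*z) = 2 * gcd (gcd x y) z" using gcd3_scale[of 2 x y z] by simp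
    then show "(case b of (x, y, z) \<Rightarrow> (2 * x, 2 * y, 2 * z)) \<in> Agset n"
      using xyz k unfolding Agset_def tildeA_def by (auto simp: mult.commute)
  qed
  then show ?thesis using True k by simp
qed

lemma Mset_sum:
  "hecke_T n f \<tau> = (\<Sum>t\<in>M1 n \<union> S1 n. FF f \<tau> t) + (\<Sum>t\<in>S2 n. FF f \<tau> t)"
proof -
  have f1: "finite (M1 n \<union> S1 n)"
    by (rule finite_subset[OF _ finite_tildeA[of n]]) (auto simp: M1_def S1_def tildeA_def)
  have f2: "finite (S2 n)"
    by (rule finite_subset[OF _ finite_tildeA[of "2*n"]]) (auto simp: S2_def tildeA_def)
  let ?g = "\<lambda>(x,y,z). (x,y,z,False)" and ?h = "\<lambda>(x,y,z). (x,y,z,True)"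
  let ?G = "\<lambda>(x::int,y::int,z::int,s::bool). f (act x y z \<tau>)"
  have inj1: "inj_on ?g (M1 n \<union> S1 n)" by (auto simp: inj_on_def)
  have inj2: "inj_on ?h (S2 n)" by (auto simp: inj_on_def)
  have "hecke_T n f \<tau> = sum ?G (?g ` (M1 n \<union> S1 n) \<union> ?h ` S2 n)"
    unfolding hecke_T_def Mset_def by simp
  also have "\<dots> = sum ?G (?g ` (M1 n \<union> S1 n)) + sum ?G (?h ` S2 n)"
    by (rule sum.union_disjoint) (use f1 f2 in auto)
  also have "sum ?G (?g ` (M1 n \<union> S1 n)) = sum (?G \<circ> ?g) (M1 n \<union> S1 n)"
    by (rule sum.reindex[OF inj1])
  also have "sum ?G (?h ` S2 n) = sum (?G \<circ> ?h) (S2 n)"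
    by (rule sum.reindex[OF inj2])
  also have "?G \<circ> ?g = FF f \<tau>" by (auto simp: FF_def fun_eq_iff)
  also have "?G \<circ> ?h = FF f \<tau>" by (auto simp: FF_def fun_eq_iff)
  finally show ?thesis .
qed


lemma P_sets:
  "M1 n \<union> S1 n = {(x,y,z). (x,y,z) \<in> tildeA n \<and> gcd (gcd x y) z = 1 \<and> \<not> (even x \<and> even z)}"
  "S2 n = {(x,y,z). (x,y,z) \<in> tildeA (2*n) \<and> gcd (gcd x y) z = 1 \<and> (even x \<and> even z)}"
  unfolding M1_def S1_def S2_def tildeA_def by auto

lemma Rset_pow: "Rset (2^a * n) = Rset n"
proof -
  have "r^2 dvd 2^a * n \<longleftrightarrow> r^2 dvd n" if "odd r" for r :: nat
  proof -
    have "coprime (r^2) (2^a)" using that by simp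
    then show ?thesis by (rule coprime_dvd_mult_right_iff)
  qed
  then show ?thesis unfolding Rset_def by auto
qed

lemma Rset_2: "Rset (2 * n) = Rset n"
  using Rset_pow[of 1 n] by simp

definition G :: "(complex \<Rightarrow> complex) \<Rightarrow> complex \<Rightarrow> nat \<Rightarrow> complex" where
  "G f \<tau> n = (\<Sum>t\<in>Aoset n. FF f \<tau> t) + (\<Sum>t\<in>Aeset (2*n). FF f \<tau> t)"

lemma T_sum:
  assumes n: "n > 0"
  shows "(\<Sum>r\<in>Rset n. hecke_T (n div r^2) f \<tau>) = G f \<tau> n"
proof -
  let ?P1 = "\<lambda>k. {(x,y,z). (x,y,z) \<in> tildeA k \<and> gcd (gcd x y) z = 1 \<and> \<not> (even x \<and> even z)}"
  let ?P2 = "\<lambda>k. {(x,y,z). (x,y,z) \<in> tildeA k \<and> gcd (gcd x y) z = 1 \<and> (even x \<and> even z)}"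
  have h: "hecke_T (n div r^2) f \<tau> = (\<Sum>t\<in>?P1 (n div r^2). FF f \<tau> t) + (\<Sum>t\<in>?P2 ((2*n) div r^2). FF f \<tau> t)"
    if "r \<in> Rset n" for r
  proof -
    have "r^2 dvd n" using that unfolding Rset_def by auto
    then have "2 * (n div r^2) = (2*n) div r^2" by (simp add: div_mult_swap)
    then show ?thesis using Mset_sum[of "n div r^2" f \<tau>] P_sets[of "n div r^2"] by simp
  qed
  have "(\<Sum>r\<in>Rset n. hecke_T (n div r^2) f \<tau>)
      = (\<Sum>r\<in>Rset n. \<Sum>t\<in>?P1 (n div r^2). FF f \<tau> t) + (\<Sum>r\<in>Rset (2*n). \<Sum>t\<in>?P2 ((2*n) div r^2). FF f \<tau> t)"
    by (simp add: h sum.distrib Rset_2)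
  also have "(\<Sum>r\<in>Rset n. \<Sum>t\<in>?P1 (n div r^2). FF f \<tau> t) = (\<Sum>t\<in>Aoset n. FF f \<tau> t)"
    using scale_sum[OF n, of "FF f \<tau>" "\<lambda>x z. \<not> (even x \<and> even z)"] FF_scale
    unfolding Aoset_def by simp
  also have "(\<Sum>r\<in>Rset (2*n). \<Sum>t\<in>?P2 ((2*n) div r^2). FF f \<tau> t) = (\<Sum>t\<in>Aeset (2*n). FF f \<tau> t)"
    using scale_sum[of "2*n" "FF f \<tau>" "\<lambda>x z. even x \<and> even z"] n FF_scale
    unfolding Aeset_def by simp
  finally show ?thesis unfolding G_def .
qed

lemma Ae2_empty: "odd n \<Longrightarrow> Aeset (2*n) = {}"
proof (rule ccontr)
  assume n: "odd n" and "Aeset (2*n) \<noteq> {}"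
  then obtain x y z where m: "(x,y,z) \<in> Aeset (2*n)" by auto
  have m1: "x * z = 2 * int n" using m unfolding Aeset_def tildeA_def by simp
  have e: "even x" "even z" using m unfolding Aeset_def by simp_all
  obtain a where a: "x = 2*a" using e(1) by (elim evenE)
  obtain b where b: "z = 2*b" using e(2) by (elim evenE)
  have "int n = 2 * (a*b)" using m1 unfolding a b by (simp add: algebra_simps)
  then have "even (int n)" by simp
  with n show False by simp
qed

lemma L_gen: "hecke_tildeT k f \<tau> = (\<Sum>t\<in>tildeA k. FF f \<tau> t) + (\<Sum>t\<in>Aeset (2*k). FF f \<tau> t)
   + (\<Sum>t\<in>Agset (2*k). FF f \<tau> t)"
proof (cases "even k")
  case True
  have "hecke_tildeT k f \<tau> = (\<Sum>t\<in>tildeA k. FF f \<tau> t) + (\<Sum>t\<in>tildeB k. FF f \<tau> t)"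
    using True unfolding hecke_tildeT_def FF_def by (simp add: case_prod_unfold)
  then show ?thesis using tildeB_sum[of "FF f \<tau>" k] by simp
next
  case False
  have "\<not> 4 dvd 2*k" using False by auto
  then have "Agset (2*k) = {}" by (rule Ag_empty)
  moreover have "Aeset (2*k) = {}" using False by (intro Ae2_empty) simp
  moreover have "hecke_tildeT k f \<tau> = (\<Sum>t\<in>tildeA k. FF f \<tau> t)"
    using False unfolding hecke_tildeT_def FF_def by (simp add: case_prod_unfold)
  ultimately show ?thesis by simp
qed

lemma L_odd: "odd n \<Longrightarrow> hecke_tildeT n f \<tau> = G f \<tau> n"
proof -
  assume n: "odd n"
  have "\<not> 4 dvd n" using n by auto
  then have "Agset n = {}" by (rule Ag_empty)
  moreover have "\<not> 4 dvd 2*n" using n by auto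
  then have "Agset (2*n) = {}" by (rule Ag_empty)
  moreover have "Aeset n = {}" using n by (rule Ae_empty)
  ultimately show ?thesis using L_gen[of n f \<tau>] tildeA_sum[of "FF f \<tau>" n]
    unfolding G_def by simp
qed

lemma L_even: "hecke_tildeT (2*k) f \<tau> = G f \<tau> (2*k) + hecke_tildeT k f \<tau>"
proof -
  have "(\<Sum>t\<in>Agset (2*(2*k)). FF f \<tau> t) = (\<Sum>t\<in>tildeA k. FF f \<tau> t)"
    using Ag_sum[where n="2*(2*k)" and f=f and \<tau>=\<tau>] by simp
  then show ?thesis
    using L_gen[of "2*k" f \<tau>] L_gen[of k f \<tau>] tildeA_sum[of "FF f \<tau>" "2*k"]
    unfolding G_def by (simp add: algebra_simps)
qed

lemma L_pow: "odd \<beta> \<Longrightarrow> hecke_tildeT (2^a * \<beta>) f \<tau> = (\<Sum>j\<in>{0..a}. G f \<tau> (2^j * \<beta>))"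
proof (induction a)
  case 0 then show ?case using L_odd[of \<beta> f \<tau>] by simp
next
  case (Suc a)
  have "hecke_tildeT (2^Suc a * \<beta>) f \<tau> = hecke_tildeT (2 * (2^a * \<beta>)) f \<tau>" by (simp add: mult.assoc)
  also have "\<dots> = G f \<tau> (2 * (2^a * \<beta>)) + hecke_tildeT (2^a * \<beta>) f \<tau>" by (rule L_even)
  also have "\<dots> = (\<Sum>j\<in>{0..Suc a}. G f \<tau> (2^j * \<beta>))"
    using Suc by (simp add: sum.atLeast0_atMost_Suc mult.assoc)
  finally show ?case .
qed

theorem proposition2p10:
  fixes m \<alpha> \<beta> :: nat and f :: "complex \<Rightarrow> complex"
  assumes "m > 0" and "m = 2 ^ \<alpha> * \<beta>" and "odd \<beta>"
    and "f meromorphic_on upper_half_plane"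
    and "gamma0_2_plus_invariant f"
    and "\<tau> \<in> upper_half_plane"
  shows "hecke_tildeT m f \<tau> =
    (\<Sum>r\<in>{r::nat. r > 0 \<and> odd r \<and> r ^ 2 dvd m}.
       \<Sum>i\<in>{0..\<alpha>}. hecke_T (m div (r ^ 2 * 2 ^ i)) f \<tau>)"
proof -
  have R: "{r::nat. r > 0 \<and> odd r \<and> r ^ 2 dvd m} = Rset m" by (simp add: Rset_def)
  have bpos: "\<beta> > 0" using assms(3) by (cases \<beta>) auto
  have "(\<Sum>r\<in>Rset m. \<Sum>i\<in>{0..\<alpha>}. hecke_T (m div (r ^ 2 * 2 ^ i)) f \<tau>)
      = (\<Sum>i\<in>{0..\<alpha>}. \<Sum>r\<in>Rset m. hecke_T (m div (r ^ 2 * 2 ^ i)) f \<tau>)"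
    by (rule sum.swap)
  also have "\<dots> = (\<Sum>i\<in>{0..\<alpha>}. G f \<tau> (2^(\<alpha>-i) * \<beta>))"
  proof (rule sum.cong[OF refl])
    fix i assume i: "i \<in> {0..\<alpha>}"
    have mi: "m = 2^i * (2^(\<alpha>-i) * \<beta>)" using i assms(2)
      by (simp add: mult.assoc[symmetric] power_add[symmetric])
    have d: "m div (r ^ 2 * 2 ^ i) = (2^(\<alpha>-i) * \<beta>) div r^2" for r :: nat
    proof -
      have "m div (r ^ 2 * 2 ^ i) = m div (2^i * r^2)" by (simp add: mult.commute)
      also have "\<dots> = m div 2^i div r^2" by (rule div_mult2_eq)
      also have "m div 2^i = 2^(\<alpha>-i) * \<beta>" using mi by simp
      finally show ?thesis .
    qed
    have "Rset m = Rset (2^(\<alpha>-i) * \<beta>)" using Rset_pow assms(2) by simp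
    then have "(\<Sum>r\<in>Rset m. hecke_T (m div (r ^ 2 * 2 ^ i)) f \<tau>)
        = (\<Sum>r\<in>Rset (2^(\<alpha>-i) * \<beta>). hecke_T ((2^(\<alpha>-i) * \<beta>) div r^2) f \<tau>)"
      by (simp add: d)
    also have "\<dots> = G f \<tau> (2^(\<alpha>-i) * \<beta>)" by (rule T_sum) (simp add: bpos)
    finally show "(\<Sum>r\<in>Rset m. hecke_T (m div (r ^ 2 * 2 ^ i)) f \<tau>) = G f \<tau> (2^(\<alpha>-i) * \<beta>)" .
  qed
  also have "\<dots> = (\<Sum>j\<in>{0..\<alpha>}. G f \<tau> (2^j * \<beta>))"
    using sum.atLeastAtMost_rev[of "\<lambda>j. G f \<tau> (2^j * \<beta>)" 0 \<alpha>] by simp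
  also have "\<dots> = hecke_tildeT m f \<tau>" using L_pow[OF assms(3)] assms(2) by simp
  finally show ?thesis unfolding R by simp
qed

end
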